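(* Let $V=(\mathbb F_2)^n$ and $\gamma\in\mathrm{Sym}(V)$ with $0\gamma=0$. Then: (i) If $\gamma$ maps $\mathcal L(W)$ onto $\mathcal L(W')$, then for every $u\in W$, $\hat\gamma_u(V)\subseteq W'$. (ii) If $\gamma$ maps $\mathcal L(W)$ onto $\mathcal{LA}_U(W_1|W_2)$, then for every $u\in W$: $\hat\gamma_u(S)\subseteq W_1$ where $S=U\gamma^{-1}$, and $\hat\gamma_u(S')\subseteq W_2$ where $S'=(U+\bar v)\gamma^{-1}$ for an arbitrary $\bar v\in V\setminus U$. (iii) If $\gamma$ maps $\mathcal{LA}_U(W_1|W_2)$ onto $\mathcal L(W)$, then for every $u\in W_1$, $\hat\gamma_u(U)\subseteq W$; and for every $u\in W_2$, $\hat\gamma_u(U+\bar v)\subseteq W$ for an arbitrary $\bar v\in V\setminus U$. (iv) If $\gamma$ maps $\mathcal{LA}_U(W_1|W_2)$ onto $\mathcal{LA}_{U'}(W_1'|W_2')$, then, with $\bar v\in V\setminus U$ and $\bar v'\in V\setminus U'$ arbitrary: for every $u\in W_1$, $\hat\gamma_u(S)\subseteq W_1'$ where $S=U\cap (U'\gamma^{-1})$; for every $u\in W_2$, $\hat\gamma_u(S')\subseteq W_1'$ where $S'=(U+\bar v)\cap (U'\gamma^{-1})$; for every $u\in W_1$, $\hat\gamma_u(S)\subseteq W_2'$ where $S=U\cap ((U'+\bar v')\gamma^{-1})$; for every $u\in W_2$, $\hat\gamma_u(S')\subseteq W_2'$ where $S'=(U+\bar v)\cap((U'+\bar v')\ga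mma^{-1})$.
   Context: Permutations act on the right; for $X\subseteq V$, $X\gamma^{-1}$ is the preimage of $X$ under $\gamma$. The derivative of $\gamma$ in direction $u$ is $\hat\gamma_u(x)=(x+u)\gamma+x\gamma$, and $\hat\gamma_u(S)=\{\hat\gamma_u(s):s\in S\}$. A permutation maps a partition $\mathcal A$ onto $\mathcal B$ if the images of the blocks of $\mathcal A$ are exactly the blocks of $\mathcal B$. For a subspace $W$, $\mathcal L(W)=\{W+v:v\in V\}$. For a subspace $U$ of dimension $n-1$ and subspaces $W_1,W_2\subseteq U$, $\mathcal{LA}_U(W_1|W_2)=\{W_1+v:v\in U\}\cup\{(W_2+\bar v)+v:v\in U\}$ for any $\bar v\in V\setminus U$ (independent of the choice). *)

theory Defs
  imports "HOL-Analysis.Analysis" "HOL-Library.Z2"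
begin

text \<open>V = (F_2)^n is modelled as the type bit ^ 'n; subspaces are F_2-subspaces
  (vec.subspace for scalar multiplication (*s)).\<close>

type_synonym 'n V2 = "bit ^ 'n"

text \<open>Right action: x gamma = gamma x. Derivative of gamma in direction u.\<close>
definition deriv2 :: "(('n::finite) V2 \<Rightarrow> 'n V2) \<Rightarrow> 'n V2 \<Rightarrow> 'n V2 \<Rightarrow> 'n V2" where
  "deriv2 \<gamma> u x = \<gamma> (x + u) + \<gamma> x"

definition coset2 :: "('n::finite) V2 set \<Rightarrow> 'n V2 \<Rightarrow> 'n V2 set" where
  "coset2 W v = (\<lambda>w. w + v) ` W"

definition maps_onto :: "(('n::finite) V2 \<Rightarrow> 'n V2) \<Rightarrow> 'n V2 set set \<Rightarrow> 'n V2 set set \<Rightarrow> bool" where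
  "maps_onto \<gamma> A B \<longleftrightarrow> (\<lambda>X. \<gamma> ` X) ` A = B"

definition LL :: "('n::finite) V2 set \<Rightarrow> 'n V2 set set" where
  "LL W = {coset2 W v | v. True}"

text \<open>LA_U(W1|W2), using a chosen vbar outside U (the paper notes independence of the choice).\<close>
definition LA :: "('n::finite) V2 set \<Rightarrow> 'n V2 set \<Rightarrow> 'n V2 set \<Rightarrow> 'n V2 set set" where
  "LA U W1 W2 = (let vb = (SOME vb. vb \<notin> U) in
     {coset2 W1 v | v. v \<in> U} \<union> {coset2 (coset2 W2 vb) v | v. v \<in> U})"

definition hyperplane2 :: "('n::finite) V2 set \<Rightarrow> bool" where
  "hyperplane2 U \<longleftrightarrow> vec.subspace U \<and> vec.dim U = CARD('n) - 1"

end

theory Submission imports Defs begin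
lemma add_self2[simp]: "(x::'n::finite V2) + x = 0"
  by (simp add: vec_eq_iff)
lemma add_cancel2[simp]: "(x::'n::finite V2) + (x + y) = y" "x + y + y = x"
  by (metis add.assoc add_self2 add_0 add.right_neutral)+
lemma minus2[simp]: "(x::'n::finite V2) - y = x + y"
  by (simp add: diff_eq_eq)
lemma hyp_sum:
  assumes h: "hyperplane2 (U::'n::finite V2 set)" and a: "a \<notin> U" and b: "b \<notin> U"
  shows "a + b \<in> U"
proof -
  have sU: "vec.subspace U" and d: "vec.dim U = CARD('n) - 1" using h by (auto simp: hyperplane2_def)
  have sp: "vec.span U = U" by (rule vec.span_eq_iff[THEN iffD2, OF sU])
  have "a \<notin> vec.span U" unfolding sp by (rule a)
  hence "vec.dim (insert a U) = CARD('n)" using d vec.dim_insert[of a U] by simp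
  hence "vec.span (insert a U) = UNIV"
    by (metis vec.dim_eq_full vec.dimension_def vec_dim_card vec.dim_UNIV)
  hence "b \<in> vec.span (insert a U)" by simp
  then obtain k where k: "b - k *s a \<in> vec.span U" using vec.span_breakdown_eq by blast
  hence k2: "b - k *s a \<in> U" unfolding sp .
  show ?thesis
  proof (cases "k = 0")
    case True thus ?thesis using k2 b by simp
  next
    case False hence "k = 1" by (cases k) auto
    thus ?thesis using k2 by (simp add: add.commute)
  qed
qed

lemma sum_shift2: "((a::'n::finite V2) + v) + (b + v) = a + b"
  by (metis add.assoc add.commute add_cancel2(1))

lemma sub_add: "vec.subspace W \<Longrightarrow> x \<in> W \<Longrightarrow> y \<in> W \<Longrightarrow> x + y \<in> W"
  by (rule vec.subspace_add)

lemma maps_onto_block: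
  "maps_onto \<gamma> A B \<Longrightarrow> X \<in> A \<Longrightarrow> x \<in> X \<Longrightarrow> y \<in> X \<Longrightarrow> \<exists>Y\<in>B. \<gamma> x \<in> Y \<and> \<gamma> y \<in> Y"
  unfolding maps_onto_def by blast

lemma LL_src:
  assumes "vec.subspace W" "u \<in> W"
  shows "\<exists>X\<in>LL W. x \<in> X \<and> x + u \<in> X"
proof -
  have "0 \<in> W" using assms(1) vec.subspace_0 by blast
  hence "x \<in> coset2 W x" "x + u \<in> coset2 W x" using assms unfolding coset2_def
    by (force, auto simp: add.commute)
  thus ?thesis unfolding LL_def by blast
qed

lemma LL_tgt:
  assumes "vec.subspace W" "Y \<in> LL W" "p \<in> Y" "q \<in> Y"
  shows "q + p \<in> W"
proof -
  obtain v where Y: "Y = coset2 W v" using assms(2) unfolding LL_def by blast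
  obtain a b where "a \<in> W" "b \<in> W" "p = a + v" "q = b + v" using assms(3,4) unfolding Y coset2_def by blast
  thus ?thesis using sum_shift2 sub_add assms(1) by metis
qed

lemma notin_coset:
  assumes "vec.subspace U" "vb \<notin> U" "p \<in> coset2 U vb"
  shows "p \<notin> U"
proof
  assume p: "p \<in> U"
  obtain w where "w \<in> U" "p = w + vb" using assms(3) unfolding coset2_def by blast
  hence "vb = w + p" by simp
  thus False using sub_add[OF assms(1) \<open>w \<in> U\<close> p] assms(2) by simp
qed

lemma vb0: "vb \<notin> U \<Longrightarrow> (SOME vb. vb \<notin> U) \<notin> U"
  by (metis someI)

lemma LA_tgt:
  assumes U: "vec.subspace U" and vb: "vb \<notin> U" and W1: "vec.subspace W1" "W1 \<subseteq> U"
    and W2: "vec.subspace W2" "W2 \<subseteq> U"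
    and Y: "Y \<in> LA U W1 W2" and pq: "p \<in> Y" "q \<in> Y"
  shows "p \<in> U \<Longrightarrow> q + p \<in> W1" and "p \<notin> U \<Longrightarrow> q + p \<in> W2"
proof -
  define v0 where "v0 = (SOME vb. vb \<notin> U)"
  have v0: "v0 \<notin> U" unfolding v0_def using vb0[OF vb] .
  have "(\<exists>v\<in>U. Y = coset2 W1 v) \<or> (\<exists>v\<in>U. Y = coset2 (coset2 W2 v0) v)"
    using Y unfolding LA_def v0_def Let_def by blast
  then consider (A) v where "v \<in> U" "Y = coset2 W1 v" | (B) v where "v \<in> U" "Y = coset2 (coset2 W2 v0) v"
    by blast
  then have "(p \<in> U \<longrightarrow> q + p \<in> W1) \<and> (p \<notin> U \<longrightarrow> q + p \<in> W2)"
  proof cases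
    case A
    obtain a b where ab: "a \<in> W1" "b \<in> W1" "p = a + v" "q = b + v" using pq unfolding A coset2_def by blast
    have "p \<in> U" using ab A W1 U sub_add by blast
    moreover have "q + p \<in> W1" using ab sum_shift2 sub_add W1(1) by metis
    ultimately show ?thesis by blast
  next
    case B
    obtain a b where ab: "a \<in> W2" "b \<in> W2" "p = a + v0 + v" "q = b + v0 + v" using pq unfolding B coset2_def by blast
    have "p \<notin> U"
    proof
      assume "p \<in> U"
      have "a + v \<in> U" using ab B W2 U sub_add by blast
      hence "(a + v) + p \<in> U" using \<open>p \<in> U\<close> U sub_add by blast
      moreover have "(a + v) + p = v0" unfolding ab(3)
        by (metis add.assoc add.commute add_cancel2(1))
      ultimately show False using v0 by simp
    qed
    moreover have "q + p \<in> W2" using ab sum_shift2 sub_add W2(1) by metis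
    ultimately show ?thesis by blast
  qed
  thus "p \<in> U \<Longrightarrow> q + p \<in> W1" and "p \<notin> U \<Longrightarrow> q + p \<in> W2" by blast+
qed

lemma LA_src1:
  assumes W1: "vec.subspace W1" "u \<in> W1" and x: "x \<in> U"
  shows "\<exists>X\<in>LA U W1 W2. x \<in> X \<and> x + u \<in> X"
proof -
  have "0 \<in> W1" using W1(1) vec.subspace_0 by blast
  hence "x \<in> coset2 W1 x" "x + u \<in> coset2 W1 x" using W1 unfolding coset2_def
    by (force, auto simp: add.commute)
  moreover have "coset2 W1 x \<in> LA U W1 W2" using x unfolding LA_def Let_def by blast
  ultimately show ?thesis by blast
qed

lemma LA_src2:
  assumes h: "hyperplane2 U" and vb: "vb \<notin> U" and W2: "vec.subspace W2" "u \<in> W2"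
    and x: "x \<in> coset2 U vb"
  shows "\<exists>X\<in>LA U W1 W2. x \<in> X \<and> x + u \<in> X"
proof -
  have U: "vec.subspace U" using h by (simp add: hyperplane2_def)
  define v0 where "v0 = (SOME vb. vb \<notin> U)"
  have v0: "v0 \<notin> U" unfolding v0_def using vb0[OF vb] .
  obtain y where y: "y \<in> U" "x = y + vb" using x unfolding coset2_def by blast
  have "vb + v0 \<in> U" using hyp_sum[OF h vb v0] .
  hence xv: "x + v0 \<in> U" using y U sub_add add.assoc by metis
  have "0 \<in> W2" using W2(1) vec.subspace_0 by blast
  have "x = 0 + v0 + (x + v0)" by (metis add.commute add_0 add_cancel2(1))
  hence "x \<in> coset2 (coset2 W2 v0) (x + v0)" using \<open>0 \<in> W2\<close> unfolding coset2_def by blast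
  moreover have "x + u = u + v0 + (x + v0)" by (metis add.assoc add.commute add_cancel2(1))
  hence "x + u \<in> coset2 (coset2 W2 v0) (x + v0)" using W2 unfolding coset2_def by blast
  moreover have "coset2 (coset2 W2 v0) (x + v0) \<in> LA U W1 W2" using xv unfolding LA_def Let_def v0_def by blast
  ultimately show ?thesis by blast
qed

lemma key: "deriv2 \<gamma> u x = \<gamma> (x + u) + \<gamma> x" by (simp add: deriv2_def)

lemma partI:
  assumes "vec.subspace W" "vec.subspace W'" "maps_onto \<gamma> (LL W) (LL W')" "u \<in> W"
  shows "deriv2 \<gamma> u x \<in> W'"
proof -
  obtain X where "X \<in> LL W" "x \<in> X" "x + u \<in> X" using LL_src[OF assms(1,4)] by blast
  then obtain Y where "Y \<in> LL W'" "\<gamma> x \<in> Y" "\<gamma> (x+u) \<in> Y"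
    using maps_onto_block[OF assms(3)] by blast
  thus ?thesis unfolding key using LL_tgt[OF assms(2)] by blast
qed

lemma partII:
  assumes "vec.subspace W" "hyperplane2 U" "vec.subspace W1" "vec.subspace W2"
      "W1 \<subseteq> U" "W2 \<subseteq> U" "vb \<notin> U" "maps_onto \<gamma> (LL W) (LA U W1 W2)" "u \<in> W"
  shows "\<gamma> x \<in> U \<Longrightarrow> deriv2 \<gamma> u x \<in> W1" "\<gamma> x \<in> coset2 U vb \<Longrightarrow> deriv2 \<gamma> u x \<in> W2"
proof -
  have U: "vec.subspace U" using assms(2) by (simp add: hyperplane2_def)
  obtain X where "X \<in> LL W" "x \<in> X" "x + u \<in> X" using LL_src[OF assms(1,9)] by blast
  then obtain Y where Y: "Y \<in> LA U W1 W2" "\<gamma> x \<in> Y" "\<gamma> (x+u) \<in> Y"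
    using maps_onto_block[OF assms(8)] by blast
  note T = LA_tgt[OF U assms(7) assms(3) assms(5) assms(4) assms(6) Y]
  show "\<gamma> x \<in> U \<Longrightarrow> deriv2 \<gamma> u x \<in> W1" unfolding key using T(1) .
  show "\<gamma> x \<in> coset2 U vb \<Longrightarrow> deriv2 \<gamma> u x \<in> W2" unfolding key
    using T(2) notin_coset[OF U assms(7)] by blast
qed

lemma partIII:
  assumes "vec.subspace W" "hyperplane2 U" "vec.subspace W1" "vec.subspace W2"
      "vb \<notin> U" "maps_onto \<gamma> (LA U W1 W2) (LL W)"
  shows "u \<in> W1 \<Longrightarrow> x \<in> U \<Longrightarrow> deriv2 \<gamma> u x \<in> W"
    "u \<in> W2 \<Longrightarrow> x \<in> coset2 U vb \<Longrightarrow> deriv2 \<gamma> u x \<in> W"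
proof -
  assume "u \<in> W1" "x \<in> U"
  then obtain X where "X \<in> LA U W1 W2" "x \<in> X" "x + u \<in> X" using LA_src1[OF assms(3)] by blast
  then obtain Y where "Y \<in> LL W" "\<gamma> x \<in> Y" "\<gamma> (x+u) \<in> Y"
    using maps_onto_block[OF assms(6)] by blast
  thus "deriv2 \<gamma> u x \<in> W" unfolding key using LL_tgt[OF assms(1)] by blast
next
  assume "u \<in> W2" "x \<in> coset2 U vb"
  then obtain X where "X \<in> LA U W1 W2" "x \<in> X" "x + u \<in> X" using LA_src2[OF assms(2,5,4)] by blast
  then obtain Y where "Y \<in> LL W" "\<gamma> x \<in> Y" "\<gamma> (x+u) \<in> Y"
    using maps_onto_block[OF assms(6)] by blast
  thus "deriv2 \<gamma> u x \<in> W" unfolding key using LL_tgt[OF assms(1)] by blast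
qed

lemma partIV:
  assumes "hyperplane2 U" "vec.subspace W1" "vec.subspace W2" "vb \<notin> U"
     "hyperplane2 U'" "vec.subspace W1'" "vec.subspace W2'" "W1' \<subseteq> U'" "W2' \<subseteq> U'" "vb' \<notin> U'"
     "maps_onto \<gamma> (LA U W1 W2) (LA U' W1' W2')"
     and X: "X \<in> LA U W1 W2" "x \<in> X" "x + u \<in> X"
  shows "\<gamma> x \<in> U' \<Longrightarrow> deriv2 \<gamma> u x \<in> W1'" "\<gamma> x \<in> coset2 U' vb' \<Longrightarrow> deriv2 \<gamma> u x \<in> W2'"
proof -
  have U: "vec.subspace U'" using assms(5) by (simp add: hyperplane2_def)
  obtain Y where Y: "Y \<in> LA U' W1' W2'" "\<gamma> x \<in> Y" "\<gamma> (x+u) \<in> Y"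
    using maps_onto_block[OF assms(11) X] by blast
  note T = LA_tgt[OF U assms(10) assms(6) assms(8) assms(7) assms(9) Y]
  show "\<gamma> x \<in> U' \<Longrightarrow> deriv2 \<gamma> u x \<in> W1'" unfolding key using T(1) .
  show "\<gamma> x \<in> coset2 U' vb' \<Longrightarrow> deriv2 \<gamma> u x \<in> W2'" unfolding key
    using T(2) notin_coset[OF U assms(10)] by blast
qed

lemma partIV_all:
  assumes "hyperplane2 U" "vec.subspace W1" "vec.subspace W2" "vb \<notin> U"
     "hyperplane2 U'" "vec.subspace W1'" "vec.subspace W2'" "W1' \<subseteq> U'" "W2' \<subseteq> U'" "vb' \<notin> U'"
     "maps_onto \<gamma> (LA U W1 W2) (LA U' W1' W2')"
  shows "u \<in> W1 \<Longrightarrow> x \<in> U \<Longrightarrow> \<gamma> x \<in> U' \<Longrightarrow> deriv2 \<gamma> u x \<in> W1'"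
    "u \<in> W2 \<Longrightarrow> x \<in> coset2 U vb \<Longrightarrow> \<gamma> x \<in> U' \<Longrightarrow> deriv2 \<gamma> u x \<in> W1'"
    "u \<in> W1 \<Longrightarrow> x \<in> U \<Longrightarrow> \<gamma> x \<in> coset2 U' vb' \<Longrightarrow> deriv2 \<gamma> u x \<in> W2'"
    "u \<in> W2 \<Longrightarrow> x \<in> coset2 U vb \<Longrightarrow> \<gamma> x \<in> coset2 U' vb' \<Longrightarrow> deriv2 \<gamma> u x \<in> W2'"
proof -
  note P = partIV[OF assms]
  show "u \<in> W1 \<Longrightarrow> x \<in> U \<Longrightarrow> \<gamma> x \<in> U' \<Longrightarrow> deriv2 \<gamma> u x \<in> W1'"
    using LA_src1[OF assms(2), of u x U W2] P(1) by blast
  show "u \<in> W2 \<Longrightarrow> x \<in> coset2 U vb \<Longrightarrow> \<gamma> x \<in> U' \<Longrightarrow> deriv2 \<gamma> u x \<in> W1'"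
    using LA_src2[OF assms(1,4,3), of u x W1] P(1) by blast
  show "u \<in> W1 \<Longrightarrow> x \<in> U \<Longrightarrow> \<gamma> x \<in> coset2 U' vb' \<Longrightarrow> deriv2 \<gamma> u x \<in> W2'"
    using LA_src1[OF assms(2), of u x U W2] P(2) by blast
  show "u \<in> W2 \<Longrightarrow> x \<in> coset2 U vb \<Longrightarrow> \<gamma> x \<in> coset2 U' vb' \<Longrightarrow> deriv2 \<gamma> u x \<in> W2'"
    using LA_src2[OF assms(1,4,3), of u x W1] P(2) by blast
qed

lemma c1: "(\<forall>W W'. vec.subspace W \<and> vec.subspace W' \<and> maps_onto \<gamma> (LL W) (LL W') \<longrightarrow>
      (\<forall>u\<in>W. deriv2 \<gamma> u ` UNIV \<subseteq> W'))"
proof (intro allI impI ballI subsetI)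
  fix W W' u y assume h: "vec.subspace W \<and> vec.subspace W' \<and> maps_onto \<gamma> (LL W) (LL W')"
    and u: "u \<in> W" and y: "y \<in> deriv2 \<gamma> u ` UNIV"
  from y obtain x where x: "y = deriv2 \<gamma> u x" by blast
  show "y \<in> W'" unfolding x using h u partI by blast
qed

lemma c2: "(\<forall>W U W1 W2 vb. vec.subspace W \<and> hyperplane2 U \<and> vec.subspace W1 \<and> vec.subspace W2 \<and>
      W1 \<subseteq> U \<and> W2 \<subseteq> U \<and> vb \<notin> U \<and> maps_onto \<gamma> (LL W) (LA U W1 W2) \<longrightarrow>
      (\<forall>u\<in>W. deriv2 \<gamma> u ` (\<gamma> -` U) \<subseteq> W1 \<and>
               deriv2 \<gamma> u ` (\<gamma> -` coset2 U vb) \<subseteq> W2))"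
proof (intro allI impI ballI conjI subsetI)
  fix W U W1 W2 vb u y
  assume h: "vec.subspace W \<and> hyperplane2 U \<and> vec.subspace W1 \<and> vec.subspace W2 \<and>
      W1 \<subseteq> U \<and> W2 \<subseteq> U \<and> vb \<notin> U \<and> maps_onto \<gamma> (LL W) (LA U W1 W2)" and u: "u \<in> W"
  note P = partII[of W U W1 W2 vb \<gamma> u] 
  { assume "y \<in> deriv2 \<gamma> u ` (\<gamma> -` U)"
    then obtain x where x: "y = deriv2 \<gamma> u x" "\<gamma> x \<in> U" by blast
    show "y \<in> W1" unfolding x using P(1) h u x(2) by blast }
  { assume "y \<in> deriv2 \<gamma> u ` (\<gamma> -` coset2 U vb)"
    then obtain x where x: "y = deriv2 \<gamma> u x" "\<gamma> x \<in> coset2 U vb" by blast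
    show "y \<in> W2" unfolding x using P(2) h u x(2) by blast }
qed

lemma c3: "(\<forall>W U W1 W2 vb. vec.subspace W \<and> hyperplane2 U \<and> vec.subspace W1 \<and> vec.subspace W2 \<and>
      W1 \<subseteq> U \<and> W2 \<subseteq> U \<and> vb \<notin> U \<and> maps_onto \<gamma> (LA U W1 W2) (LL W) \<longrightarrow>
      (\<forall>u\<in>W1. deriv2 \<gamma> u ` U \<subseteq> W) \<and>
      (\<forall>u\<in>W2. deriv2 \<gamma> u ` coset2 U vb \<subseteq> W))"
proof (intro allI impI ballI conjI subsetI)
  fix W U W1 W2 vb u y
  assume h: "vec.subspace W \<and> hyperplane2 U \<and> vec.subspace W1 \<and> vec.subspace W2 \<and>
      W1 \<subseteq> U \<and> W2 \<subseteq> U \<and> vb \<notin> U \<and> maps_onto \<gamma> (LA U W1 W2) (LL W)"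
  note P = partIII[of W U W1 W2 vb \<gamma>]
  { assume u: "u \<in> W1" and "y \<in> deriv2 \<gamma> u ` U"
    then obtain x where x: "y = deriv2 \<gamma> u x" "x \<in> U" by blast
    show "y \<in> W" unfolding x using P(1) h u x(2) by blast }
  { assume u: "u \<in> W2" and "y \<in> deriv2 \<gamma> u ` coset2 U vb"
    then obtain x where x: "y = deriv2 \<gamma> u x" "x \<in> coset2 U vb" by blast
    show "y \<in> W" unfolding x using P(2) h u x(2) by blast }
qed

lemma c4: "(\<forall>U W1 W2 U' W1' W2' vb vb'. hyperplane2 U \<and> vec.subspace W1 \<and> vec.subspace W2 \<and>
      W1 \<subseteq> U \<and> W2 \<subseteq> U \<and> hyperplane2 U' \<and> vec.subspace W1' \<and> vec.subspace W2' \<and>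
      W1' \<subseteq> U' \<and> W2' \<subseteq> U' \<and> vb \<notin> U \<and> vb' \<notin> U' \<and>
      maps_onto \<gamma> (LA U W1 W2) (LA U' W1' W2') \<longrightarrow>
      (\<forall>u\<in>W1. deriv2 \<gamma> u ` (U \<inter> \<gamma> -` U') \<subseteq> W1') \<and>
      (\<forall>u\<in>W2. deriv2 \<gamma> u ` (coset2 U vb \<inter> \<gamma> -` U') \<subseteq> W1') \<and>
      (\<forall>u\<in>W1. deriv2 \<gamma> u ` (U \<inter> \<gamma> -` coset2 U' vb') \<subseteq> W2') \<and>
      (\<forall>u\<in>W2. deriv2 \<gamma> u ` (coset2 U vb \<inter> \<gamma> -` coset2 U' vb') \<subseteq> W2'))"
proof (intro allI impI ballI conjI subsetI)
  fix U W1 W2 U' W1' W2' vb vb' u y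
  assume h: "hyperplane2 U \<and> vec.subspace W1 \<and> vec.subspace W2 \<and>
      W1 \<subseteq> U \<and> W2 \<subseteq> U \<and> hyperplane2 U' \<and> vec.subspace W1' \<and> vec.subspace W2' \<and>
      W1' \<subseteq> U' \<and> W2' \<subseteq> U' \<and> vb \<notin> U \<and> vb' \<notin> U' \<and>
      maps_onto \<gamma> (LA U W1 W2) (LA U' W1' W2')"
  hence hh: "hyperplane2 U" "vec.subspace W1" "vec.subspace W2" "vb \<notin> U"
     "hyperplane2 U'" "vec.subspace W1'" "vec.subspace W2'" "W1' \<subseteq> U'" "W2' \<subseteq> U'" "vb' \<notin> U'"
     "maps_onto \<gamma> (LA U W1 W2) (LA U' W1' W2')" by blast+
  note P = partIV_all[OF hh]
  { assume u: "u \<in> W1" and "y \<in> deriv2 \<gamma> u ` (U \<inter> \<gamma> -` U')"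
    then obtain x where x: "y = deriv2 \<gamma> u x" "x \<in> U" "\<gamma> x \<in> U'" by blast
    show "y \<in> W1'" unfolding x(1) using P(1)[OF u x(2,3)] . }
  { assume u: "u \<in> W2" and "y \<in> deriv2 \<gamma> u ` (coset2 U vb \<inter> \<gamma> -` U')"
    then obtain x where x: "y = deriv2 \<gamma> u x" "x \<in> coset2 U vb" "\<gamma> x \<in> U'" by blast
    show "y \<in> W1'" unfolding x(1) using P(2)[OF u x(2,3)] . }
  { assume u: "u \<in> W1" and "y \<in> deriv2 \<gamma> u ` (U \<inter> \<gamma> -` coset2 U' vb')"
    then obtain x where x: "y = deriv2 \<gamma> u x" "x \<in> U" "\<gamma> x \<in> coset2 U' vb'" by blast
    show "y \<in> W2'" unfolding x(1) using P(3)[OF u x(2,3)] . }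
  { assume u: "u \<in> W2" and "y \<in> deriv2 \<gamma> u ` (coset2 U vb \<inter> \<gamma> -` coset2 U' vb')"
    then obtain x where x: "y = deriv2 \<gamma> u x" "x \<in> coset2 U vb" "\<gamma> x \<in> coset2 U' vb'" by blast
    show "y \<in> W2'" unfolding x(1) using P(4)[OF u x(2,3)] . }
qed

theorem lemma3p7:
  fixes \<gamma> :: "('n::finite) V2 \<Rightarrow> 'n V2"
  assumes bij: "bij \<gamma>" and zero: "\<gamma> 0 = 0"
  shows
  "(\<forall>W W'. vec.subspace W \<and> vec.subspace W' \<and> maps_onto \<gamma> (LL W) (LL W') \<longrightarrow>
      (\<forall>u\<in>W. deriv2 \<gamma> u ` UNIV \<subseteq> W'))
   \<and>
   (\<forall>W U W1 W2 vb. vec.subspace W \<and> hyperplane2 U \<and> vec.subspace W1 \<and> vec.subspace W2 \<and>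
      W1 \<subseteq> U \<and> W2 \<subseteq> U \<and> vb \<notin> U \<and> maps_onto \<gamma> (LL W) (LA U W1 W2) \<longrightarrow>
      (\<forall>u\<in>W. deriv2 \<gamma> u ` (\<gamma> -` U) \<subseteq> W1 \<and>
               deriv2 \<gamma> u ` (\<gamma> -` coset2 U vb) \<subseteq> W2))
   \<and>
   (\<forall>W U W1 W2 vb. vec.subspace W \<and> hyperplane2 U \<and> vec.subspace W1 \<and> vec.subspace W2 \<and>
      W1 \<subseteq> U \<and> W2 \<subseteq> U \<and> vb \<notin> U \<and> maps_onto \<gamma> (LA U W1 W2) (LL W) \<longrightarrow>
      (\<forall>u\<in>W1. deriv2 \<gamma> u ` U \<subseteq> W) \<and>
      (\<forall>u\<in>W2. deriv2 \<gamma> u ` coset2 U vb \<subseteq> W))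
   \<and>
   (\<forall>U W1 W2 U' W1' W2' vb vb'. hyperplane2 U \<and> vec.subspace W1 \<and> vec.subspace W2 \<and>
      W1 \<subseteq> U \<and> W2 \<subseteq> U \<and> hyperplane2 U' \<and> vec.subspace W1' \<and> vec.subspace W2' \<and>
      W1' \<subseteq> U' \<and> W2' \<subseteq> U' \<and> vb \<notin> U \<and> vb' \<notin> U' \<and>
      maps_onto \<gamma> (LA U W1 W2) (LA U' W1' W2') \<longrightarrow>
      (\<forall>u\<in>W1. deriv2 \<gamma> u ` (U \<inter> \<gamma> -` U') \<subseteq> W1') \<and>
      (\<forall>u\<in>W2. deriv2 \<gamma> u ` (coset2 U vb \<inter> \<gamma> -` U') \<subseteq> W1') \<and>
      (\<forall>u\<in>W1. deriv2 \<gamma> u ` (U \<inter> \<gamma> -` coset2 U' vb') \<subseteq> W2') \<and>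
      (\<forall>u\<in>W2. deriv2 \<gamma> u ` (coset2 U vb \<inter> \<gamma> -` coset2 U' vb') \<subseteq> W2'))"
  using c1[of \<gamma>] c2[of \<gamma>] c3[of \<gamma>] c4[of \<gamma>] by (intro conjI)

end
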